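(* Let $\psi:X\to Y$ be a function between two finite metric spaces such that $\psi(X)$ is $D$-dense in $Y$ for some $D\geq0$. Let $B\subseteq Y$ be nonempty. Then $$|\psi^{-1}(B)|\geq|B|\cdot\frac{1}{N_Y(D)}\cdot\left(1-\frac{|\partial^{\rm in}_D(B)|}{|B|}\right).$$
   Context: A subset $S\subseteq Y$ is $D$-dense if every point of $Y$ is within distance $D$ of a point of $S$. $N_Y(D)=\sup_{y\in Y}|B(y,D)|$, where $B(y,D)$ is the closed ball. The inner $D$-boundary of $B\subseteq Y$ is $\partial^{\rm in}_D(B)=\{y\in B: d(y,Y\setminus B)\leq D\}$. *)

theory Defs
  imports "HOL-Analysis.Analysis"
begin

text \<open>Finite metric spaces are modelled as finite subsets of metric-space types.\<close>

definition dense_in :: "real \<Rightarrow> 'b::metric_space set \<Rightarrow> 'b set \<Rightarrow> bool" where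
  "dense_in D S Y \<longleftrightarrow> (\<forall>y\<in>Y. \<exists>s\<in>S. dist y s \<le> D)"

definition ball_count :: "'b::metric_space set \<Rightarrow> real \<Rightarrow> nat" where
  "ball_count Y D = Max ((\<lambda>y. card (cball y D \<inter> Y)) ` Y)"

text \<open>Inner D-boundary of B in Y; d(y, empty set) is +infinity, so the set is empty if B = Y.\<close>
definition inner_boundary :: "'b::metric_space set \<Rightarrow> real \<Rightarrow> 'b set \<Rightarrow> 'b set" where
  "inner_boundary Y D B = {y\<in>B. \<exists>z\<in>Y - B. dist y z \<le> D}"

end

theory Submission
  imports Defs
begin

theorem lemma3p16:
  fixes X :: "'a::metric_space set" and Y :: "'b::metric_space set"
    and \<psi> :: "'a \<Rightarrow> 'b" and D :: real and B :: "'b set"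
  assumes "finite X" and "finite Y"
    and "\<psi> ` X \<subseteq> Y"
    and "D \<ge> 0"
    and "dense_in D (\<psi> ` X) Y"
    and "B \<subseteq> Y" and "B \<noteq> {}"
  shows "real (card {x\<in>X. \<psi> x \<in> B})
           \<ge> real (card B) * (1 / real (ball_count Y D))
               * (1 - real (card (inner_boundary Y D B)) / real (card B))"
proof -
  define N where "N = ball_count Y D"
  define S where "S = \<psi> ` {x\<in>X. \<psi> x \<in> B}"
  define I where "I = B - inner_boundary Y D B"
  have finB: "finite B" using assms(2,6) finite_subset by blast
  have cB: "card B > 0" using finB assms(7) by (simp add: card_gt_0_iff)
  have Yne: "Y \<noteq> {}" using assms(6,7) by blast
  have Nle: "card (cball y D \<inter> Y) \<le> N" if "y \<in> Y" for y
    unfolding N_def ball_count_def using that assms(2) by (intro Max_ge) auto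
  obtain y0 where y0: "y0 \<in> Y" using Yne by blast
  have "y0 \<in> cball y0 D \<inter> Y" using y0 assms(4) by simp
  then have "card (cball y0 D \<inter> Y) > 0"
    using assms(2) card_gt_0_iff by blast
  with Nle[OF y0] have Npos: "N > 0" by linarith
  have SB: "S \<subseteq> B" unfolding S_def by auto
  have finS: "finite S" using SB finB finite_subset by blast
  have IU: "I \<subseteq> (\<Union>s\<in>S. cball s D \<inter> Y)"
  proof
    fix y assume yI: "y \<in> I"
    then have yB: "y \<in> B" and nb: "\<forall>z\<in>Y - B. dist y z > D"
      unfolding I_def inner_boundary_def by (auto simp: not_le[symmetric])
    from yB assms(6,5) obtain s where s: "s \<in> \<psi> ` X" "dist y s \<le> D"
      unfolding dense_in_def by blast
    have "s \<in> Y" using s assms(3) by blast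
    with nb s have "s \<in> B" by force
    with s have "s \<in> S" unfolding S_def by auto
    moreover have "y \<in> cball s D \<inter> Y" using s yB assms(6) by (auto simp: dist_commute)
    ultimately show "y \<in> (\<Union>s\<in>S. cball s D \<inter> Y)" by blast
  qed
  have "card I \<le> card (\<Union>s\<in>S. cball s D \<inter> Y)"
    using IU finS assms(2) by (intro card_mono) auto
  also have "\<dots> \<le> (\<Sum>s\<in>S. card (cball s D \<inter> Y))" by (rule card_UN_le[OF finS])
  also have "\<dots> \<le> card S * N"
    using sum_bounded_above[of S "\<lambda>s. card (cball s D \<inter> Y)" N] Nle SB assms(6) by auto
  also have "card S \<le> card {x\<in>X. \<psi> x \<in> B}" unfolding S_def
    by (rule card_image_le) (use assms(1) in auto)
  finally have key: "card I \<le> card {x\<in>X. \<psi> x \<in> B} * N" by (simp add: mult_right_mono)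
  have bsub: "inner_boundary Y D B \<subseteq> B" unfolding inner_boundary_def by auto
  have cI: "real (card I) = real (card B) - real (card (inner_boundary Y D B))"
    unfolding I_def using card_Diff_subset[OF finite_subset[OF bsub finB] bsub]
      card_mono[OF finB bsub] by simp
  have "real (card B) * (1 / real N) * (1 - real (card (inner_boundary Y D B)) / real (card B))
      = real (card I) / real N" using cB cI Npos by (simp add: field_simps) (metis distrib_left)
  also have "\<dots> \<le> real (card {x\<in>X. \<psi> x \<in> B})"
    using key Npos by (simp add: divide_le_eq of_nat_mult[symmetric] del: of_nat_mult)
  finally show ?thesis unfolding N_def .
qed

end
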